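(* Let $p\ge 1$, let $k_i,k_j>0$ be real numbers, and let $A,B$ be real symmetric $p\times p$ matrices. Consider the optimization problem \[ \max_{Y\in\mathbb{S}_+^p}\; k_i\log\det\Big(A-\tfrac{1}{k_i}Y\Big)+k_j\log\det\Big(B+\tfrac{1}{k_j}Y\Big)\quad\text{subject to}\quad -k_jB\prec Y\prec k_iA . \] Suppose this problem is feasible, i.e. there exists $Y\in\mathbb{S}_+^p$ with $-k_jB\prec Y\prec k_iA$. Then $A\succ O$, and an optimal solution of the problem is \[ Y^\ast=\frac{k_ik_j}{k_i+k_j}\,A^{1/2}\,\mathrm{proj}_{\mathbb{S}_+^p}\Big(I-A^{-1/2}BA^{-1/2}\Big)\,A^{1/2}. \]
   Context: $\mathbb{S}_+^p$ denotes the set of real symmetric positive semi-definite $p\times p$ matrices. For symmetric matrices $X,Y$, $X\preceq Y$ means $Y-X$ is positive semi-definite and $X\prec Y$ means $Y-X$ is positive definite; $O$ is the zero matrix and $I$ the identity. $A^{1/2}$ is the symmetric positive definite square root and $A^{-1/2}$ its inverse. $\mathrm{proj}_{\mathbb{S}_+^p}$ is the Frobenius-norm orthogonal projection onto $\mathbb{S}_+^p$ (for a symmetric matrix with eigen-decomposition $U\mathrm{diag}(\lambda)U^{\mathsf T}$ it equals $U\mathrm{diag}(\max(\lambda,0))U^{\mathsf T}$). *)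

theory Defs
  imports "HOL-Analysis.Analysis"
begin

text \<open>Real p x p matrices are rendered as real^'n^'n with p = CARD('n) (so p >= 1).\<close>

definition sym_mat :: "real^'n^'n \<Rightarrow> bool" where
  "sym_mat A \<longleftrightarrow> transpose A = A"

definition psd :: "real^'n^'n \<Rightarrow> bool" where
  "psd A \<longleftrightarrow> sym_mat A \<and> (\<forall>x. 0 \<le> x \<bullet> (A *v x))"

definition pd :: "real^'n^'n \<Rightarrow> bool" where
  "pd A \<longleftrightarrow> sym_mat A \<and> (\<forall>x. x \<noteq> 0 \<longrightarrow> 0 < x \<bullet> (A *v x))"

definition loewner_le :: "real^'n^'n \<Rightarrow> real^'n^'n \<Rightarrow> bool" (infix "\<preceq>\<^sub>L" 50) where
  "X \<preceq>\<^sub>L Y \<longleftrightarrow> psd (Y - X)"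

definition loewner_less :: "real^'n^'n \<Rightarrow> real^'n^'n \<Rightarrow> bool" (infix "\<prec>\<^sub>L" 50) where
  "X \<prec>\<^sub>L Y \<longleftrightarrow> pd (Y - X)"

definition msqrt :: "real^'n^'n \<Rightarrow> real^'n^'n" where
  "msqrt A = (THE S. psd S \<and> S ** S = A)"

definition msqrt_inv :: "real^'n^'n \<Rightarrow> real^'n^'n" where
  "msqrt_inv A = matrix_inv (msqrt A)"

text \<open>Frobenius-norm orthogonal projection onto S_+^p. The norm on real^'n^'n
  is the Euclidean norm of all entries, i.e. the Frobenius norm.\<close>
definition proj_psd :: "real^'n^'n \<Rightarrow> real^'n^'n" where
  "proj_psd X = (THE P. psd P \<and> (\<forall>Q. psd Q \<longrightarrow> norm (X - P) \<le> norm (X - Q)))"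

definition obj :: "real \<Rightarrow> real \<Rightarrow> real^'n^'n \<Rightarrow> real^'n^'n \<Rightarrow> real^'n^'n \<Rightarrow> real" where
  "obj ki kj A B Y = ki * ln (det (A - (1/ki) *\<^sub>R Y)) + kj * ln (det (B + (1/kj) *\<^sub>R Y))"

definition feasible :: "real \<Rightarrow> real \<Rightarrow> real^'n^'n \<Rightarrow> real^'n^'n \<Rightarrow> real^'n^'n \<Rightarrow> bool" where
  "feasible ki kj A B Y \<longleftrightarrow> psd Y \<and> - (kj *\<^sub>R B) \<prec>\<^sub>L Y \<and> Y \<prec>\<^sub>L ki *\<^sub>R A"

end

theory Submission
  imports Defs
begin


lemma inner_mat_sym:
  fixes A :: "real^'n^'n"
  assumes "transpose A = A"
  shows "inner x (A *v y) = inner (A *v x) y"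
  by (metis assms dot_lmul_matrix transpose_matrix_vector inner_commute)

lemma quad_nonneg_lin:
  fixes a b :: real
  assumes "\<forall>t. 0 \<le> 2*t*b + t^2*a" shows "b = 0"
proof (rule ccontr)
  assume "b \<noteq> 0"
  have a0: "a \<ge> 0" using assms[rule_format, of 1] assms[rule_format, of "-1"] by simp
  define t where "t = -b/(a+1)"
  have "0 \<le> 2*t*b + t^2*a" using assms by blast
  hence "0 \<le> (2*t*b + t^2*a)*(a+1)^2" using a0 by simp
  also have "(2*t*b + t^2*a)*(a+1)^2 = 2*b*(t*(a+1))*(a+1) + (t*(a+1))^2*a"
    by (simp add: power2_eq_square algebra_simps)
  also have "t*(a+1) = -b" using a0 unfolding t_def by simp
  also have "2*b*(-b)*(a+1) + (-b)^2*a = b^2*(-a-2)"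
    by (simp add: power2_eq_square algebra_simps)
  also have "\<dots> < 0" using \<open>b\<noteq>0\<close> a0 by (simp add: mult_pos_neg)
  finally show False by simp
qed

lemma eigbasis_sub:
  fixes A :: "real^'n^'n"
  assumes sym: "transpose A = A"
  shows "subspace S \<Longrightarrow> (\<forall>x\<in>S. A *v x \<in> S) \<Longrightarrow>
    \<exists>B. B \<subseteq> S \<and> S \<subseteq> span B \<and> pairwise orthogonal B \<and> (\<forall>b\<in>B. norm b = 1 \<and> (\<exists>\<mu>. A *v b = \<mu> *\<^sub>R b))"
proof (induction "dim S" arbitrary: S rule: less_induct)
  case less
  show ?case
  proof (cases "S \<subseteq> {0}")
    case True
    then show ?thesis by (rule_tac x="{}" in exI) auto
  next
    case False
    then obtain x0 where x0: "x0 \<in> S" "x0 \<noteq> 0" by auto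
    define K where "K = S \<inter> sphere 0 1"
    have "compact K" unfolding K_def
      by (metis Int_commute closed_subspace compact_Int_closed compact_sphere less.prems(1))
    moreover have "K \<noteq> {}"
    proof -
      have "(1/norm x0) *\<^sub>R x0 \<in> K" using x0 less.prems(1) unfolding K_def
        by (auto simp: subspace_scale)
      thus ?thesis by auto
    qed
    moreover have "continuous_on K (\<lambda>x. inner x (A *v x))"
    proof - have c: "continuous_on K ((*v) A)" by (rule matrix_vector_mult_linear_continuous_on)
      show ?thesis by (intro continuous_on_inner continuous_on_id c) qed
    ultimately obtain v where v: "v \<in> K" "\<forall>y\<in>K. inner y (A *v y) \<le> inner v (A *v v)"
      using continuous_attains_sup[of K "\<lambda>x. inner x (A *v x)"] by blast
    define m where "m = inner v (A *v v)"
    have vS: "v \<in> S" and nv: "norm v = 1" using v(1) by (auto simp: K_def)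
    have bound: "inner x (A *v x) \<le> m * (norm x)^2" if "x \<in> S" for x
    proof (cases "x = 0")
      case True then show ?thesis by simp
    next
      case False
      have "(1/norm x) *\<^sub>R x \<in> K" using that False less.prems(1) unfolding K_def
        by (auto simp: subspace_scale)
      hence "inner ((1/norm x) *\<^sub>R x) (A *v ((1/norm x) *\<^sub>R x)) \<le> m" using v(2) m_def by blast
      hence "(1/norm x)^2 * inner x (A *v x) \<le> m"
        by (simp add: matrix_vector_mult_scaleR power2_eq_square)
      hence "(1/norm x)^2 * inner x (A *v x) * (norm x)^2 \<le> m * (norm x)^2"
        by (simp add: mult_right_mono)
      thus ?thesis using False by (simp add: field_simps)
    qed
    define G where "G = (\<lambda>x. m *\<^sub>R x - A *v x)"
    have Gsym: "inner x (G y) = inner (G x) y" for x y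
      unfolding G_def using inner_mat_sym[OF sym] by (simp add: inner_diff_right inner_diff_left inner_commute)
    have Glin: "G (x + t *\<^sub>R y) = G x + t *\<^sub>R G y" for x y t
      unfolding G_def by (simp add: algebra_simps matrix_vector_mult_scaleR)
    have Gpos: "0 \<le> inner x (G x)" if "x \<in> S" for x
      using bound[OF that] unfolding G_def by (simp add: inner_diff_right power2_norm_eq_inner)
    have Gv0: "inner v (G v) = 0" using nv unfolding G_def m_def
      by (simp add: inner_diff_right power2_norm_eq_inner[symmetric])
    have orth: "inner w (G v) = 0" if "w \<in> S" for w
    proof -
      have "\<forall>t. 0 \<le> 2*t*inner w (G v) + t^2*inner w (G w)"
      proof
        fix t :: real
        have "v + t *\<^sub>R w \<in> S" using vS that less.prems(1) by (simp add: subspace_add subspace_scale)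
        hence "0 \<le> inner (v + t *\<^sub>R w) (G (v + t *\<^sub>R w))" by (rule Gpos)
        also have "\<dots> = inner v (G v) + t * inner v (G w) + t * inner w (G v) + t^2 * inner w (G w)"
          by (simp add: Glin inner_add_left inner_add_right power2_eq_square algebra_simps)
        also have "\<dots> = 2*t*inner w (G v) + t^2*inner w (G w)"
          using Gv0 Gsym[of v w] inner_commute[of "G v" w] inner_commute[of v "G w"] by (simp add: algebra_simps)
        finally show "0 \<le> 2*t*inner w (G v) + t^2*inner w (G w)" .
      qed
      thus ?thesis by (rule quad_nonneg_lin)
    qed
    have GvS: "G v \<in> S" unfolding G_def using vS less.prems
      by (simp add: subspace_diff subspace_scale)
    have "G v = 0" using orth[OF GvS] by simp
    hence Av: "A *v v = m *\<^sub>R v" unfolding G_def by simp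
    define S' where "S' = {x \<in> S. inner v x = 0}"
    have subS': "subspace S'" unfolding S'_def using less.prems(1)
      by (auto simp: subspace_def inner_add_right)
    have invS': "\<forall>x\<in>S'. A *v x \<in> S'"
      unfolding S'_def using less.prems(2) inner_mat_sym[OF sym, of v] Av by auto
    have "v \<notin> S'" using nv unfolding S'_def by auto
    hence "S' \<subset> S" using vS unfolding S'_def by blast
    hence "dim S' < dim S"
      using dim_psubset subS' less.prems(1) by (metis span_eq_iff)
    then obtain B' where B': "B' \<subseteq> S'" "S' \<subseteq> span B'" "pairwise orthogonal B'"
      "\<forall>b\<in>B'. norm b = 1 \<and> (\<exists>\<mu>. A *v b = \<mu> *\<^sub>R b)"
      using less.hyps[OF _ subS' invS'] by blast
    show ?thesis
    proof (rule exI[of _ "insert v B'"], intro conjI)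
      show "insert v B' \<subseteq> S" using B'(1) vS unfolding S'_def by auto
      show "S \<subseteq> span (insert v B')"
      proof
        fix x assume "x \<in> S"
        have "x - inner v x *\<^sub>R v \<in> S'" unfolding S'_def using \<open>x\<in>S\<close> vS nv less.prems(1)
          by (auto simp: subspace_diff subspace_scale inner_diff_right power2_norm_eq_inner[symmetric])
        hence "x - inner v x *\<^sub>R v \<in> span (insert v B')" using B'(2)
          by (meson span_mono subset_insertI subsetD)
        moreover have "inner v x *\<^sub>R v \<in> span (insert v B')" by (simp add: span_base span_scale)
        ultimately have "(x - inner v x *\<^sub>R v) + inner v x *\<^sub>R v \<in> span (insert v B')" by (rule span_add)
        thus "x \<in> span (insert v B')" by simp
      qed
      show "pairwise orthogonal (insert v B')"
        using B'(1,3) unfolding S'_def pairwise_insert orthogonal_def by (auto simp: inner_commute)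
      show "\<forall>b\<in>insert v B'. norm b = 1 \<and> (\<exists>\<mu>. A *v b = \<mu> *\<^sub>R b)"
        using B'(4) nv Av by auto
    qed
  qed
qed

definition diagm :: "real^'n \<Rightarrow> real^'n^'n" where
  "diagm d = (\<chi> i j. if i = j then d$i else 0)"

lemma spectral:
  fixes A :: "real^'n^'n"
  assumes sym: "transpose A = A"
  obtains Q d where "transpose (Q::real^'n^'n) ** Q = mat 1" "Q ** transpose Q = mat 1"
    "A = Q ** diagm d ** transpose Q"
proof -
  obtain B where B: "UNIV \<subseteq> span B" "pairwise orthogonal B"
     "\<forall>b\<in>B. norm b = 1 \<and> (\<exists>\<mu>. A *v b = \<mu> *\<^sub>R b)"
    using eigbasis_sub[OF sym, of UNIV] by auto
  have "0 \<notin> B" using B(3) by force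
  hence ind: "independent B" using B(2) pairwise_orthogonal_independent by blast
  hence finB: "finite B" using independent_bound by blast
  have "card B = dim (UNIV :: (real^'n) set)" using basis_card_eq_dim[OF _ B(1) ind] by simp
  hence cB: "card B = CARD('n)" by simp
  obtain f where f: "bij_betw f (UNIV::'n set) B"
    using finite_same_card_bij[OF finite_class.finite_UNIV finB] cB by auto
  have fB: "f j \<in> B" for j using f by (auto simp: bij_betw_def)
  have finj: "f i = f j \<Longrightarrow> i = j" for i j using f by (auto simp: bij_betw_def inj_on_def)
  define Q where "Q = (\<chi> i j. f j $ i)"
  define d where "d = (\<chi> j. SOME \<mu>. A *v f j = \<mu> *\<^sub>R f j)"
  have eig: "A *v f j = d$j *\<^sub>R f j" for j
  proof -
    have "\<exists>\<mu>. A *v f j = \<mu> *\<^sub>R f j" using B(3) fB by blast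
    hence "A *v f j = (SOME \<mu>. A *v f j = \<mu> *\<^sub>R f j) *\<^sub>R f j" by (rule someI_ex)
    thus ?thesis unfolding d_def by simp
  qed
  have on: "inner (f i) (f j) = (if i = j then 1 else 0)" for i j
  proof (cases "i = j")
    case True thus ?thesis using B(3) fB by (simp add: dot_square_norm)
  next
    case False
    hence "f i \<noteq> f j" using finj by blast
    hence "orthogonal (f i) (f j)" using B(2) fB unfolding pairwise_def by blast
    thus ?thesis using False unfolding orthogonal_def by simp
  qed
  have QtQ: "transpose Q ** Q = mat 1"
    unfolding Q_def by (simp add: vec_eq_iff matrix_matrix_mult_def transpose_def mat_def on[symmetric] inner_vec_def mult.commute)
  moreover have "Q ** transpose Q = mat 1"
  proof -
    obtain Q' where Q': "Q ** Q' = mat 1" using QtQ matrix_left_right_inverse by blast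
    have "transpose Q = transpose Q ** (Q ** Q')" using Q' by simp
    also have "\<dots> = Q'" by (simp add: matrix_mul_assoc QtQ)
    finally show ?thesis using Q' by simp
  qed
  moreover have "A ** Q = Q ** diagm d"
  proof -
    have "(A ** Q) $ i $ j = (Q ** diagm d) $ i $ j" for i j
    proof -
      have "(A ** Q) $ i $ j = (A *v f j) $ i"
        unfolding Q_def by (simp add: matrix_matrix_mult_def matrix_vector_mult_def)
      also have "\<dots> = d$j * f j $ i" by (simp add: eig)
      also have "\<dots> = (Q ** diagm d) $ i $ j"
        unfolding Q_def diagm_def by (simp add: matrix_matrix_mult_def if_distrib cong: if_cong)
      finally show ?thesis .
    qed
    thus ?thesis by (simp add: vec_eq_iff)
  qed
  ultimately have "A = Q ** diagm d ** transpose Q"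
    by (metis matrix_mul_assoc matrix_mul_rid)
  thus ?thesis using that[of Q d] QtQ \<open>Q ** transpose Q = mat 1\<close> by blast
qed



lemma mm_add_rdistrib: "((A::real^'n^'m) + B) ** C = A ** C + B ** C"
  by (simp add: vec_eq_iff matrix_matrix_mult_def sum.distrib distrib_right)
lemma mm_diff_ldistrib: "(A::real^'n^'m) ** (B - C) = A ** B - A ** C"
  by (simp add: vec_eq_iff matrix_matrix_mult_def sum_subtractf right_diff_distrib)
lemma mm_diff_rdistrib: "((A::real^'n^'m) - B) ** C = A ** C - B ** C"
  by (simp add: vec_eq_iff matrix_matrix_mult_def sum_subtractf left_diff_distrib)
lemma mm_scale_l: "(k *\<^sub>R (A::real^'n^'m)) ** B = k *\<^sub>R (A ** B)"
  by (simp add: scalar_matrix_assoc)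
lemma mm_scale_r: "(A::real^'n^'m) ** (k *\<^sub>R B) = k *\<^sub>R (A ** B)"
  by (simp add: vec_eq_iff matrix_matrix_mult_def sum_distrib_left mult_ac)
lemma mm_uminus_l: "(- (A::real^'n^'m)) ** B = - (A ** B)"
  by (simp add: vec_eq_iff matrix_matrix_mult_def sum_negf)
lemma mm_uminus_r: "(A::real^'n^'m) ** (- B) = - (A ** B)"
  by (simp add: vec_eq_iff matrix_matrix_mult_def sum_negf)
lemma transpose_add: "transpose ((A::real^'n^'m) + B) = transpose A + transpose B"
  by (simp add: vec_eq_iff transpose_def)
lemma transpose_diff: "transpose ((A::real^'n^'m) - B) = transpose A - transpose B"
  by (simp add: vec_eq_iff transpose_def)
lemma transpose_uminus: "transpose (- (A::real^'n^'m)) = - transpose A"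
  by (simp add: vec_eq_iff transpose_def)

lemmas mm_simps = mm_add_rdistrib matrix_add_ldistrib mm_diff_ldistrib mm_diff_rdistrib mm_scale_l mm_scale_r
  mm_uminus_l mm_uminus_r

lemma inner_mv: "inner x ((M::real^'n^'m) *v y) = inner (transpose M *v x) y"
  by (simp add: dot_lmul_matrix)

lemma quad_cong:
  fixes H X :: "real^'n^'n"
  shows "inner x ((H ** X ** transpose H) *v x) = inner (transpose H *v x) (X *v (transpose H *v x))"
proof -
  have "(H ** X ** transpose H) *v x = H *v (X *v (transpose H *v x))"
    by (simp only: matrix_vector_mul_assoc matrix_mul_assoc)
  thus ?thesis by (simp only: inner_mv[of x H])
qed

lemma sym_cong: "sym_mat (X::real^'n^'n) \<Longrightarrow> sym_mat ((H::real^'n^'n) ** X ** transpose H)"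
  unfolding sym_mat_def
proof -
  assume X: "transpose X = X"
  have "transpose (H ** X ** transpose H) = transpose (transpose H) ** transpose (H ** X)"
    by (rule matrix_transpose_mul)
  also have "\<dots> = H ** (transpose X ** transpose H)" by (simp only: transpose_transpose matrix_transpose_mul)
  also have "\<dots> = H ** X ** transpose H" by (simp only: X matrix_mul_assoc)
  finally show "transpose (H ** X ** transpose H) = H ** X ** transpose H" .
qed

lemma psd_cong: "psd (X::real^'n^'n) \<Longrightarrow> psd ((H::real^'n^'n) ** X ** transpose H)"
  unfolding psd_def
proof (elim conjE, intro conjI allI)
  assume "sym_mat X" "\<forall>x. 0 \<le> inner x (X *v x)"
  thus "sym_mat (H ** X ** transpose H)" "0 \<le> inner x ((H ** X ** transpose H) *v x)" for x
    using sym_cong by (auto simp only: quad_cong)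
qed

lemma pd_cong:
  fixes X H Hi :: "real^'n^'n"
  assumes "pd X" "H ** Hi = mat 1"
  shows "pd (H ** X ** transpose H)"
proof -
  have "transpose Hi ** transpose H = mat 1" using assms(2)
    by (metis matrix_transpose_mul transpose_mat)
  hence inj: "transpose H *v x \<noteq> 0" if "x \<noteq> 0" for x
    using that by (metis matrix_vector_mul_assoc matrix_vector_mul_lid matrix_vector_mult_0_right)
  show ?thesis using assms(1) unfolding pd_def
    by (metis sym_cong quad_cong inj)
qed

lemma diagm_mv: "diagm d *v x = (\<chi> i. d$i * x$i)"
  unfolding diagm_def by (simp add: vec_eq_iff matrix_vector_mult_def if_distrib if_distribR cong: if_cong)

lemma quad_diagm: "inner x (diagm d *v x) = (\<Sum>i\<in>UNIV. d$i * (x$i)^2)"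
  by (simp add: diagm_mv inner_vec_def power2_eq_square mult_ac)

lemma sym_diagm: "sym_mat (diagm d)"
  unfolding sym_mat_def diagm_def by (simp add: vec_eq_iff transpose_def)

lemma quad_axis: "inner (axis i 1) ((X::real^'n^'n) *v axis i 1) = X$i$i"
  by (simp add: matrix_vector_mult_basis inner_axis' column_def)

lemma psd_diag_nonneg: "psd (X::real^'n^'n) \<Longrightarrow> 0 \<le> X$i$i"
  unfolding psd_def using quad_axis by metis

lemma pd_diag_pos: "pd (X::real^'n^'n) \<Longrightarrow> 0 < X$i$i"
  unfolding pd_def using quad_axis by (metis axis_eq_0_iff zero_neq_one)

lemma diagm_nth: "diagm d $ i $ i = d $ i"
  unfolding diagm_def by simp

lemma psd_diagm: "psd (diagm d) \<longleftrightarrow> (\<forall>i. 0 \<le> d$i)"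
proof
  assume "psd (diagm d)" thus "\<forall>i. 0 \<le> d$i" using psd_diag_nonneg diagm_nth by metis
next
  assume "\<forall>i. 0 \<le> d$i"
  thus "psd (diagm d)" unfolding psd_def using sym_diagm
    by (simp add: quad_diagm sum_nonneg)
qed

lemma pd_diagm: "pd (diagm d) \<longleftrightarrow> (\<forall>i. 0 < d$i)"
proof
  assume "pd (diagm d)" thus "\<forall>i. 0 < d$i" using pd_diag_pos diagm_nth by metis
next
  assume d: "\<forall>i. 0 < d$i"
  show "pd (diagm d)" unfolding pd_def
  proof (intro conjI allI impI sym_diagm)
    fix x :: "real^'a" assume "x \<noteq> 0"
    then obtain i where "x$i \<noteq> 0" by (auto simp: vec_eq_iff)
    hence "0 < d$i * (x$i)^2" using d by simp
    also have "\<dots> \<le> (\<Sum>i\<in>UNIV. d$i * (x$i)^2)"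
    proof (rule member_le_sum)
      show "0 \<le> d$j * (x$j)^2" for j using d[rule_format, of j] by simp
    qed auto
    finally show "0 < inner x (diagm d *v x)" by (simp add: quad_diagm)
  qed
qed

lemma diagm_mult: "diagm a ** diagm b = diagm (\<chi> i. a$i * b$i)"
  unfolding matrix_eq by (simp add: matrix_vector_mul_assoc[symmetric] diagm_mv mult.assoc)

lemma diagm_add: "diagm a + diagm b = diagm (a + b)"
  unfolding diagm_def by (simp add: vec_eq_iff)
lemma diagm_diff: "diagm a - diagm b = diagm (a - b)"
  unfolding diagm_def by (simp add: vec_eq_iff)
lemma diagm_scale: "c *\<^sub>R diagm a = diagm (c *\<^sub>R a)"
  unfolding diagm_def by (simp add: vec_eq_iff)
lemma diagm_uminus: "- diagm a = diagm (- a)"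
  unfolding diagm_def by (simp add: vec_eq_iff)
lemma mat1_diagm: "mat 1 = diagm (\<chi> i. 1)"
  unfolding diagm_def mat_def by (simp add: vec_eq_iff)
lemma transpose_diagm: "transpose (diagm d) = diagm d"
  using sym_diagm unfolding sym_mat_def by blast

lemma det_diagm: "det (diagm d) = (\<Prod>i\<in>UNIV. d$i)"
proof -
  have "det (diagm d) = (\<Prod>i\<in>UNIV. diagm d $ i $ i)"
    by (rule det_diagonal) (simp add: diagm_def)
  thus ?thesis by (simp add: diagm_nth)
qed

lemma trace_diagm: "trace (diagm d) = (\<Sum>i\<in>UNIV. d$i)"
  by (simp add: trace_def diagm_nth)



lemma mm_cancel: "(A::real^'n^'n) ** B = mat 1 \<Longrightarrow> A ** (B ** Z) = Z"
  by (simp add: matrix_mul_assoc)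

lemma orth_det: "transpose (Q::real^'n^'n) ** Q = mat 1 \<Longrightarrow> det Q * det Q = 1"
  by (metis det_I det_mul det_transpose)

lemma pd_sym: "pd X \<Longrightarrow> transpose X = X" unfolding pd_def sym_mat_def by blast
lemma psd_sym: "psd X \<Longrightarrow> transpose X = X" unfolding psd_def sym_mat_def by blast

lemma back_conj:
  fixes Q D :: "real^'n^'n"
  assumes "transpose Q ** Q = mat 1"
  shows "transpose Q ** (Q ** D ** transpose Q) ** transpose (transpose Q) = D"
proof -
  have "transpose Q ** (Q ** D ** transpose Q) ** transpose (transpose Q)
      = transpose Q ** (Q ** (D ** (transpose Q ** Q)))"
    by (simp only: matrix_mul_assoc transpose_transpose)
  also have "\<dots> = D" using assms by (simp add: mm_cancel)
  finally show ?thesis .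
qed

lemma pd_spec:
  fixes X :: "real^'n^'n"
  assumes "pd X"
  obtains Q \<mu> where "transpose (Q::real^'n^'n) ** Q = mat 1" "Q ** transpose Q = mat 1"
    "X = Q ** diagm \<mu> ** transpose Q" "\<forall>i. 0 < \<mu>$i"
proof -
  obtain Q \<mu> where Q: "transpose (Q::real^'n^'n) ** Q = mat 1" "Q ** transpose Q = mat 1"
    "X = Q ** diagm \<mu> ** transpose Q"
    using spectral[OF pd_sym[OF assms]] by blast
  have "pd (transpose Q ** X ** transpose (transpose Q))"
    using pd_cong[OF assms Q(1)] .
  hence "pd (diagm \<mu>)" using back_conj[OF Q(1), of "diagm \<mu>"] Q(3) by simp
  thus ?thesis using that Q pd_diagm by blast
qed

lemma psd_spec:
  fixes X :: "real^'n^'n"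
  assumes "psd X"
  obtains Q \<mu> where "transpose (Q::real^'n^'n) ** Q = mat 1" "Q ** transpose Q = mat 1"
    "X = Q ** diagm \<mu> ** transpose Q" "\<forall>i. 0 \<le> \<mu>$i"
proof -
  obtain Q \<mu> where Q: "transpose (Q::real^'n^'n) ** Q = mat 1" "Q ** transpose Q = mat 1"
    "X = Q ** diagm \<mu> ** transpose Q"
    using spectral[OF psd_sym[OF assms]] by blast
  have "psd (transpose Q ** X ** transpose (transpose Q))"
    using psd_cong[OF assms] .
  hence "psd (diagm \<mu>)" using back_conj[OF Q(1), of "diagm \<mu>"] Q(3) by simp
  thus ?thesis using that Q psd_diagm by blast
qed

lemma det_conj:
  fixes Q D :: "real^'n^'n"
  assumes "transpose Q ** Q = mat 1"
  shows "det (Q ** D ** transpose Q) = det D"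
proof -
  have "det (Q ** D ** transpose Q) = det D * (det Q * det Q)"
    by (simp add: det_mul det_transpose)
  thus ?thesis using orth_det[OF assms] by simp
qed

lemma trace_conj:
  fixes Q D :: "real^'n^'n"
  assumes "transpose Q ** Q = mat 1"
  shows "trace (Q ** D ** transpose Q) = trace D"
proof -
  have "trace (Q ** D ** transpose Q) = trace (transpose Q ** (Q ** D))"
    by (rule trace_mul_sym)
  also have "\<dots> = trace D" using assms by (simp add: mm_cancel)
  finally show ?thesis .
qed

lemma pd_det_pos: "pd (X::real^'n^'n) \<Longrightarrow> 0 < det X"
proof -
  assume "pd X"
  then obtain Q \<mu> where Q: "transpose (Q::real^'n^'n) ** Q = mat 1" "X = Q ** diagm \<mu> ** transpose Q" "\<forall>i. 0 < \<mu>$i"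
    by (rule pd_spec) blast
  have "det X = (\<Prod>i\<in>UNIV. \<mu>$i)" using Q det_conj det_diagm by metis
  thus ?thesis using Q(3) by (simp add: prod_pos)
qed

lemma logdet_trace: "pd (X::real^'n^'n) \<Longrightarrow> ln (det X) \<le> trace X - real CARD('n)"
proof -
  assume "pd X"
  then obtain Q \<mu> where Q: "transpose (Q::real^'n^'n) ** Q = mat 1" "X = Q ** diagm \<mu> ** transpose Q" "\<forall>i. 0 < \<mu>$i"
    by (rule pd_spec) blast
  have "det X = (\<Prod>i\<in>UNIV. \<mu>$i)" using Q det_conj det_diagm by metis
  hence "ln (det X) = (\<Sum>i\<in>UNIV. ln (\<mu>$i))" using Q(3) by (simp only:) (subst ln_prod, auto simp: less_imp_neq[symmetric])
  also have "\<dots> \<le> (\<Sum>i\<in>UNIV. \<mu>$i - 1)"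
    by (rule sum_mono) (use Q(3) in \<open>simp add: ln_le_minus_one\<close>)
  also have "\<dots> = trace X - real CARD('n)"
  proof -
    have "(\<Sum>i\<in>UNIV. \<mu>$i) = trace X" by (simp only: Q(2) trace_conj[OF Q(1)] trace_diagm)
    thus ?thesis by (simp add: sum_subtractf)
  qed
  finally show ?thesis .
qed

lemma mm_diag_r: "(X ** diagm b) $ i $ j = X$i$j * (b$j::real)"
proof -
  have eq: "(\<lambda>k. X$i$k * diagm b $ k $ j) = (\<lambda>k. if k = j then X$i$k * b$k else 0)"
    unfolding diagm_def by auto
  have "(X ** diagm b) $ i $ j = sum (\<lambda>k. X$i$k * diagm b $ k $ j) UNIV"
    by (simp add: matrix_matrix_mult_def)
  also have "\<dots> = sum (\<lambda>k. if k = j then X$i$k * b$k else 0) UNIV" by (simp only: eq)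
  also have "\<dots> = X$i$j * b$j" by simp
  finally show ?thesis .
qed

lemma mm_diag_l: "(diagm a ** X) $ i $ j = (a$i::real) * X$i$j"
proof -
  have eq: "(\<lambda>k. diagm a $ i $ k * X$k$j) = (\<lambda>k. if k = i then a$i * X$i$j else 0)"
    unfolding diagm_def by auto
  have "(diagm a ** X) $ i $ j = sum (\<lambda>k. diagm a $ i $ k * X$k$j) UNIV"
    by (simp add: matrix_matrix_mult_def)
  also have "\<dots> = sum (\<lambda>k. if k = i then a$i * X$i$j else 0) UNIV" by (simp only: eq)
  also have "\<dots> = a$i * X$i$j" by simp
  finally show ?thesis .
qed

lemma diag_sandwich: "(diagm a ** X ** diagm b) $ i $ j = a$i * X$i$j * (b$j::real)"
  by (simp only: mm_diag_r mm_diag_l)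

lemma logdet_ineq:
  fixes X :: "real^'n^'n" and d :: "real^'n"
  assumes "pd X" "\<forall>i. 0 < d$i"
  shows "ln (det X) \<le> (\<Sum>i\<in>UNIV. ln (d$i)) + (\<Sum>i\<in>UNIV. (X$i$i - d$i) / d$i)"
proof -
  have dnz: "d$i \<noteq> 0" for i using assms(2) by (metis less_irrefl)
  define E where "E = diagm (\<chi> i. 1 / sqrt (d$i))"
  define F where "F = diagm (\<chi> i. sqrt (d$i))"
  have EF: "E ** F = mat 1" unfolding E_def F_def diagm_mult mat1_diagm using assms(2)
    by (intro arg_cong[where f=diagm]) (simp add: vec_eq_iff less_imp_neq[symmetric])
  have pdX': "pd (E ** X ** transpose E)" by (rule pd_cong[OF assms(1) EF])
  have tE: "transpose E = E" unfolding E_def by (rule transpose_diagm)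
  have detE: "det E * det E = (\<Prod>i\<in>UNIV. 1 / d$i)"
    unfolding E_def det_diagm prod.distrib[symmetric] using assms(2)
    by (intro prod.cong) (auto simp: real_sqrt_mult[symmetric] less_imp_le)
  have "det (E ** X ** transpose E) = det X * (\<Prod>i\<in>UNIV. 1 / d$i)"
    using detE by (simp add: det_mul tE)
  moreover have pp: "0 < (\<Prod>i\<in>UNIV. 1 / d$i)" using assms(2) by (simp add: prod_pos)
  moreover have "ln (\<Prod>i\<in>UNIV. 1 / d$i) = (\<Sum>i\<in>UNIV. ln (1 / d$i))"
    using assms(2) by (subst ln_prod) (auto simp: dnz)
  moreover have "(\<Sum>i\<in>UNIV. ln (1 / d$i)) = - (\<Sum>i\<in>UNIV. ln (d$i))"
    using assms(2) by (simp add: ln_div sum_negf dnz)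
  ultimately have "ln (det (E ** X ** transpose E)) = ln (det X) - (\<Sum>i\<in>UNIV. ln (d$i))"
    using pd_det_pos[OF assms(1)] by (simp add: ln_mult dnz)
  moreover have "trace (E ** X ** transpose E) = (\<Sum>i\<in>UNIV. X$i$i / d$i)"
    unfolding trace_def tE unfolding E_def diag_sandwich using assms(2)
    by (intro sum.cong) (auto simp: field_simps less_imp_le)
  ultimately have "ln (det X) - (\<Sum>i\<in>UNIV. ln (d$i)) \<le> (\<Sum>i\<in>UNIV. X$i$i / d$i) - real CARD('n)"
    using logdet_trace[OF pdX'] by simp
  moreover have "(\<Sum>i\<in>UNIV. (X$i$i - d$i) / d$i) = (\<Sum>i\<in>UNIV. X$i$i / d$i) - real CARD('n)"
    using assms(2) by (simp add: diff_divide_distrib sum_subtractf dnz)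
  ultimately show ?thesis by simp
qed



lemma mat_eq_cols:
  fixes A B :: "real^'n^'m"
  assumes "\<And>k. A *v axis k 1 = B *v axis k 1"
  shows "A = B"
proof -
  have "column k A = column k B" for k using assms[of k] by (simp add: matrix_vector_mult_basis)
  thus ?thesis by (simp add: vec_eq_iff column_def)
qed

lemma diagm_axis: "diagm a *v axis j 1 = a$j *\<^sub>R axis j 1"
  by (simp add: diagm_mv vec_eq_iff axis_def)

lemma psd_sqrt_diag:
  fixes T :: "real^'n^'n"
  assumes psdT: "psd T" and TT: "T ** T = diagm a"
  shows "T = diagm (\<chi> i. sqrt (a$i))"
proof (rule mat_eq_cols)
  fix j
  define e where "e = (axis j 1 :: real^'n)"
  have symT: "transpose T = T" using psd_sym[OF psdT] .
  have TTe: "T *v (T *v e) = a$j *\<^sub>R e"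
    unfolding e_def by (simp add: matrix_vector_mul_assoc TT diagm_axis)
  have "inner (T *v e) (T *v e) = inner e (T *v (T *v e))"
    using inner_mat_sym[OF symT, of e "T *v e"] by simp
  also have "\<dots> = a$j" using TTe unfolding e_def by (simp add: inner_axis_axis)
  finally have nTe: "inner (T *v e) (T *v e) = a$j" .
  hence aj: "0 \<le> a$j" by (metis inner_ge_zero)
  define \<sigma> where "\<sigma> = sqrt (a$j)"
  have s0: "0 \<le> \<sigma>" and ss: "\<sigma> * \<sigma> = a$j" using aj unfolding \<sigma>_def by auto
  define u where "u = T *v e - \<sigma> *\<^sub>R e"
  have Tu: "T *v u = - \<sigma> *\<^sub>R u"
    unfolding u_def using TTe ss by (simp add: algebra_simps matrix_vector_mult_scaleR)
  have "0 \<le> inner u (T *v u)" using psdT unfolding psd_def by blast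
  hence le: "\<sigma> * inner u u \<le> 0" using Tu by simp
  have "u = 0"
  proof (cases "\<sigma> = 0")
    case True
    hence "a$j = 0" using ss by simp
    hence "T *v e = 0" using nTe by simp
    thus ?thesis unfolding u_def using True by simp
  next
    case False
    hence "\<sigma> > 0" using s0 by simp
    hence "inner u u \<le> 0" using le by (simp add: mult_le_0_iff)
    thus ?thesis by (meson inner_gt_zero_iff not_le)
  qed
  hence "T *v e = \<sigma> *\<^sub>R e" unfolding u_def by simp
  thus "T *v axis j 1 = diagm (\<chi> i. sqrt (a$i)) *v axis j 1"
    unfolding e_def \<sigma>_def by (simp add: diagm_axis)
qed

lemma psd_sqrt_unique:
  fixes T Q :: "real^'n^'n"
  assumes psdT: "psd T" and TT: "T ** T = Q ** diagm a ** transpose Q"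
    and Q1: "transpose Q ** Q = mat 1" and Q2: "Q ** transpose Q = mat 1"
  shows "T = Q ** diagm (\<chi> i. sqrt (a$i)) ** transpose Q"
proof -
  define T' where "T' = transpose Q ** T ** transpose (transpose Q)"
  have "psd T'" unfolding T'_def by (rule psd_cong[OF psdT])
  have "T' ** T' = transpose Q ** (T ** (Q ** transpose Q) ** T) ** Q"
    unfolding T'_def by (simp only: matrix_mul_assoc transpose_transpose)
  also have "\<dots> = transpose Q ** (Q ** diagm a ** transpose Q) ** transpose (transpose Q)"
    by (simp add: Q2 TT)
  also have "\<dots> = diagm a" by (rule back_conj[OF Q1])
  finally have "T' = diagm (\<chi> i. sqrt (a$i))" using psd_sqrt_diag[OF \<open>psd T'\<close>] by blast
  moreover have "Q ** T' ** transpose Q = T"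
    unfolding T'_def by (simp only: transpose_transpose matrix_mul_assoc Q2 matrix_mul_lid)
      (simp only: matrix_mul_assoc[symmetric] Q2 matrix_mul_rid)
  ultimately show ?thesis by simp
qed

lemma conj_mult:
  fixes Q :: "real^'n^'n"
  assumes Q1: "transpose Q ** Q = mat 1"
  shows "(Q ** D ** transpose Q) ** (Q ** E ** transpose Q) = Q ** (D ** E) ** transpose Q"
proof -
  have "(Q ** D ** transpose Q) ** (Q ** E ** transpose Q) = Q ** (D ** ((transpose Q ** Q) ** (E ** transpose Q)))"
    by (simp only: matrix_mul_assoc)
  also have "\<dots> = Q ** (D ** E) ** transpose Q" by (simp only: Q1 matrix_mul_lid matrix_mul_assoc)
  finally show ?thesis .
qed

lemma msqrt_eq:
  fixes Q :: "real^'n^'n"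
  assumes Q1: "transpose Q ** Q = mat 1" and Q2: "Q ** transpose Q = mat 1"
    and a: "\<forall>i. 0 \<le> a$i"
  shows "msqrt (Q ** diagm a ** transpose Q) = Q ** diagm (\<chi> i. sqrt (a$i)) ** transpose Q"
  unfolding msqrt_def
proof (rule the_equality)
  let ?S = "Q ** diagm (\<chi> i. sqrt (a$i)) ** transpose Q"
  show "psd ?S \<and> ?S ** ?S = Q ** diagm a ** transpose Q"
  proof
    show "psd ?S" by (rule psd_cong) (use a in \<open>simp add: psd_diagm\<close>)
    have "diagm (\<chi> i. sqrt (a$i)) ** diagm (\<chi> i. sqrt (a$i)) = diagm a"
      using a by (simp add: diagm_mult vec_eq_iff)
    thus "?S ** ?S = Q ** diagm a ** transpose Q" by (simp add: conj_mult[OF Q1])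
  qed
  fix T assume "psd T \<and> T ** T = Q ** diagm a ** transpose Q"
  thus "T = ?S" using psd_sqrt_unique Q1 Q2 by blast
qed

lemma matrix_inv_eq:
  fixes X Y :: "real^'n^'n"
  assumes "X ** Y = mat 1" "Y ** X = mat 1"
  shows "matrix_inv X = Y"
proof -
  have ex: "\<exists>Y'. X ** Y' = mat 1 \<and> Y' ** X = mat 1" using assms by blast
  define Z where "Z = matrix_inv X"
  have Z: "X ** Z = mat 1 \<and> Z ** X = mat 1"
    unfolding Z_def matrix_inv_def by (rule someI_ex[OF ex])
  have "Z = Z ** (X ** Y)" using assms by simp
  also have "\<dots> = Y" using Z by (simp add: matrix_mul_assoc)
  finally show ?thesis unfolding Z_def .
qed



lemma parallelogram:
  fixes a b :: "'a::real_inner"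
  shows "(norm (a + b))^2 + (norm (a - b))^2 = 2 * (norm a)^2 + 2 * (norm b)^2"
  unfolding power2_norm_eq_inner
  by (simp add: inner_add_left inner_add_right inner_diff_left inner_diff_right inner_commute[of b a])

lemma psd_add: "psd A \<Longrightarrow> psd B \<Longrightarrow> psd (A + B)"
  unfolding psd_def sym_mat_def by (simp add: transpose_add matrix_vector_mult_add_rdistrib inner_add_right add_nonneg_nonneg)

lemma psd_scale: "psd A \<Longrightarrow> 0 \<le> c \<Longrightarrow> psd (c *\<^sub>R A)"
  unfolding psd_def sym_mat_def
  by (simp add: transpose_scalar scaleR_matrix_vector_assoc[symmetric])

lemma psd_min_unique:
  fixes M P1 P2 :: "real^'n^'n"
  assumes "psd P1" "psd P2" "\<forall>Q. psd Q \<longrightarrow> norm (M - P1) \<le> norm (M - Q)"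
    "\<forall>Q. psd Q \<longrightarrow> norm (M - P2) \<le> norm (M - Q)"
  shows "P1 = P2"
proof -
  define a where "a = M - P1"
  define b where "b = M - P2"
  have ab: "norm a = norm b" using assms unfolding a_def b_def by (meson order_antisym)
  have "psd ((1/2) *\<^sub>R (P1 + P2))" by (rule psd_scale[OF psd_add[OF assms(1,2)]]) simp
  hence "norm a \<le> norm (M - (1/2) *\<^sub>R (P1 + P2))" using assms(3) unfolding a_def by blast
  also have "M - (1/2) *\<^sub>R (P1 + P2) = (1/2) *\<^sub>R (a + b)"
  proof -
    have "a + b = (M + M) - (P1 + P2)" unfolding a_def b_def by (simp only: diff_add_eq add_diff_eq diff_diff_eq add.commute add.left_commute)
    also have "M + M = 2 *\<^sub>R M" by (simp only: scaleR_2)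
    finally have "(1/2) *\<^sub>R (a + b) = (1/2) *\<^sub>R (2 *\<^sub>R M) - (1/2) *\<^sub>R (P1 + P2)"
      by (simp only: scaleR_right_diff_distrib)
    thus ?thesis by simp
  qed
  finally have "norm a \<le> (1/2) * norm (a + b)" by simp
  hence "(2 * norm a)^2 \<le> (norm (a + b))^2" by (intro power_mono) auto
  moreover have "(2 * norm a)^2 = 4 * (norm a)^2" by (simp add: power_mult_distrib)
  moreover have "(norm b)^2 = (norm a)^2" using ab by simp
  ultimately have "(norm (a - b))^2 \<le> 0" using parallelogram[of a b] by linarith
  hence "a - b = 0" by simp
  thus ?thesis unfolding a_def b_def by simp
qed

lemma inner_mat: "inner (X::real^'n^'m) Y = (\<Sum>i\<in>UNIV. \<Sum>j\<in>UNIV. X$i$j * Y$i$j)"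
  by (simp add: inner_vec_def)

lemma inner_trace: "inner (X::real^'n^'n) Y = trace (transpose X ** Y)"
  unfolding inner_mat trace_def by (simp add: matrix_matrix_mult_def transpose_def) (rule sum.swap)

lemma transpose_conj: "transpose ((Q::real^'n^'n) ** X ** transpose Q) = Q ** transpose X ** transpose Q"
  by (simp only: matrix_transpose_mul transpose_transpose matrix_mul_assoc)

lemma inner_conj:
  fixes Q X Y :: "real^'n^'n"
  assumes Q1: "transpose Q ** Q = mat 1"
  shows "inner (Q ** X ** transpose Q) (Q ** Y ** transpose Q) = inner X Y"
  unfolding inner_trace transpose_conj conj_mult[OF Q1] trace_conj[OF Q1] ..

lemma norm_conj:
  fixes Q X :: "real^'n^'n"
  assumes Q1: "transpose Q ** Q = mat 1"
  shows "norm (Q ** X ** transpose Q) = norm X"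
  unfolding norm_eq_sqrt_inner inner_conj[OF Q1] ..

lemma norm_sq_ge_diag: "(\<Sum>i\<in>UNIV. (X$i$i)^2) \<le> (norm (X::real^'n^'n))^2"
proof -
  have "(\<Sum>i\<in>UNIV. (X$i$i)^2) \<le> (\<Sum>i\<in>UNIV. \<Sum>j\<in>UNIV. X$i$j * X$i$j)"
  proof (rule sum_mono)
    fix i
    show "(X$i$i)^2 \<le> (\<Sum>j\<in>UNIV. X$i$j * X$i$j)"
      using member_le_sum[of i UNIV "\<lambda>j. X$i$j * X$i$j"] by (simp add: power2_eq_square)
  qed
  also have "\<dots> = (norm X)^2" by (simp add: power2_norm_eq_inner inner_mat)
  finally show ?thesis .
qed

lemma norm_sq_diagm: "(norm (diagm v))^2 = (\<Sum>i\<in>UNIV. (v$i)^2)"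
proof -
  have "(norm (diagm v))^2 = (\<Sum>i\<in>UNIV. \<Sum>j\<in>UNIV. diagm v$i$j * diagm v$i$j)"
    by (simp add: power2_norm_eq_inner inner_mat)
  also have "\<dots> = (\<Sum>i\<in>UNIV. (v$i)^2)"
  proof (rule sum.cong[OF refl])
    fix i
    have eqi: "(\<lambda>j. diagm v$i$j * diagm v$i$j) = (\<lambda>j. if j = i then (v$i)^2 else 0)"
      unfolding diagm_def by (auto simp: power2_eq_square)
    show "(\<Sum>j\<in>UNIV. diagm v$i$j * diagm v$i$j) = (v$i)^2" by (simp only: eqi) simp
  qed
  finally show ?thesis .
qed

lemma conj_diff:
  fixes Q :: "real^'n^'n"
  shows "Q ** D ** transpose Q - Q ** E ** transpose Q = Q ** (D - E) ** transpose Q"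
  by (simp only: mm_diff_ldistrib mm_diff_rdistrib)

lemma proj_eq:
  fixes Q :: "real^'n^'n"
  assumes Q1: "transpose Q ** Q = mat 1" and Q2: "Q ** transpose Q = mat 1"
  shows "proj_psd (Q ** diagm \<mu> ** transpose Q) = Q ** diagm (\<chi> i. max (\<mu>$i) 0) ** transpose Q"
  unfolding proj_psd_def
proof (rule the_equality)
  let ?M = "Q ** diagm \<mu> ** transpose Q"
  let ?P = "Q ** diagm (\<chi> i. max (\<mu>$i) 0) ** transpose Q"
  have psdP: "psd ?P" by (rule psd_cong) (simp add: psd_diagm)
  have minP: "\<forall>R. psd R \<longrightarrow> norm (?M - ?P) \<le> norm (?M - R)"
  proof (intro allI impI)
    fix R :: "real^'n^'n" assume R: "psd R"
    define R' where "R' = transpose Q ** R ** transpose (transpose Q)"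
    have psdR': "psd R'" unfolding R'_def by (rule psd_cong[OF R])
    have RR: "R = Q ** R' ** transpose Q"
      unfolding R'_def by (simp only: transpose_transpose matrix_mul_assoc Q2 matrix_mul_lid)
        (simp only: matrix_mul_assoc[symmetric] Q2 matrix_mul_rid)
    have "(norm (?M - ?P))^2 = (\<Sum>i\<in>UNIV. (\<mu>$i - max (\<mu>$i) 0)^2)"
      unfolding conj_diff norm_conj[OF Q1] diagm_diff norm_sq_diagm by simp
    also have "\<dots> \<le> (\<Sum>i\<in>UNIV. ((diagm \<mu> - R')$i$i)^2)"
    proof (rule sum_mono)
      fix i
      have "0 \<le> R'$i$i" by (rule psd_diag_nonneg[OF psdR'])
      have e: "(diagm \<mu> - R')$i$i = \<mu>$i - R'$i$i" by (simp add: diagm_nth)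
      show "(\<mu>$i - max (\<mu>$i) 0)^2 \<le> ((diagm \<mu> - R')$i$i)^2"
      proof (cases "0 \<le> \<mu>$i")
        case True thus ?thesis by simp
      next
        case False
        hence "\<bar>\<mu>$i - max (\<mu>$i) 0\<bar> \<le> \<bar>(diagm \<mu> - R')$i$i\<bar>"
          using \<open>0 \<le> R'$i$i\<close> unfolding e by simp
        thus ?thesis by (simp only: abs_le_square_iff)
      qed
    qed
    also have "\<dots> \<le> (norm (diagm \<mu> - R'))^2" by (rule norm_sq_ge_diag)
    also have "\<dots> = (norm (?M - R))^2"
      unfolding RR conj_diff norm_conj[OF Q1] ..
    finally show "norm (?M - ?P) \<le> norm (?M - R)" by (rule power2_le_imp_le) simp
  qed
  show "psd ?P \<and> (\<forall>R. psd R \<longrightarrow> norm (?M - ?P) \<le> norm (?M - R))" using psdP minP by blast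
  fix P :: "real^'n^'n" assume "psd P \<and> (\<forall>R. psd R \<longrightarrow> norm (?M - P) \<le> norm (?M - R))"
  thus "P = ?P" using psd_min_unique[of P ?P ?M] psdP minP by blast
qed



lemma pd_scale: "pd A \<Longrightarrow> 0 < c \<Longrightarrow> pd (c *\<^sub>R A)"
  unfolding pd_def sym_mat_def
  by (simp add: transpose_scalar scaleR_matrix_vector_assoc[symmetric])

lemma reduced:
  fixes lam :: "real^'n" and ki kj :: real
  assumes ki: "ki > 0" and kj: "kj > 0"
    and ex: "\<exists>W0. psd W0 \<and> pd (ki *\<^sub>R mat 1 - W0) \<and> pd (W0 + kj *\<^sub>R diagm lam)"
  defines "Ws \<equiv> diagm (\<chi> i. (ki * kj / (ki + kj)) * max (1 - lam$i) 0)"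
  shows "psd Ws \<and> pd (ki *\<^sub>R mat 1 - Ws) \<and> pd (Ws + kj *\<^sub>R diagm lam) \<and>
    (\<forall>W. psd W \<and> pd (ki *\<^sub>R mat 1 - W) \<and> pd (W + kj *\<^sub>R diagm lam) \<longrightarrow>
       ki * ln (det (mat 1 - (1/ki) *\<^sub>R W)) + kj * ln (det (diagm lam + (1/kj) *\<^sub>R W))
       \<le> ki * ln (det (mat 1 - (1/ki) *\<^sub>R Ws)) + kj * ln (det (diagm lam + (1/kj) *\<^sub>R Ws)))"
proof -
  have kk: "ki + kj \<noteq> 0" "ki \<noteq> 0" "kj \<noteq> 0" using ki kj by auto
  define c where "c = ki * kj / (ki + kj)"
  define p where "p = (\<chi> i. max (1 - lam$i) 0)"
  obtain W0 where W0: "psd W0" "pd (ki *\<^sub>R mat 1 - W0)" "pd (W0 + kj *\<^sub>R diagm lam)" using ex by blast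
  have pos: "0 < ki + kj * lam$i" for i
  proof -
    have "0 < (ki *\<^sub>R mat 1 - W0)$i$i" by (rule pd_diag_pos[OF W0(2)])
    moreover have "0 < (W0 + kj *\<^sub>R diagm lam)$i$i" by (rule pd_diag_pos[OF W0(3)])
    ultimately show ?thesis by (simp add: mat_def diagm_nth)
  qed
  define u where "u = (\<chi> i. 1 - c * p$i / ki)"
  define v where "v = (\<chi> i. lam$i + c * p$i / kj)"
  have uv: "u$i = (ki + kj * lam$i) / (ki + kj) \<and> v$i = (ki + kj * lam$i) / (ki + kj)
            \<or> (p$i = 0 \<and> 1 \<le> lam$i \<and> u$i = 1 \<and> v$i = lam$i)" for i
  proof (cases "lam$i < 1")
    case True
    hence P: "p$i = 1 - lam$i" unfolding p_def by simp
    have "c = ki * (kj/(ki+kj))" unfolding c_def by simp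
    hence c1: "c / ki = kj / (ki+kj)" by (metis nonzero_mult_div_cancel_left kk(2))
    have "c = kj * (ki/(ki+kj))" unfolding c_def by simp
    hence c2: "c / kj = ki / (ki+kj)" by (metis nonzero_mult_div_cancel_left kk(3))
    have cu: "c * p$i / ki = kj * (1 - lam$i) / (ki+kj)"
      using c1 by (metis P times_divide_eq_left mult.commute)
    have cv: "c * p$i / kj = ki * (1 - lam$i) / (ki+kj)"
      using c2 by (metis P times_divide_eq_left mult.commute)
    have "u$i = (ki + kj * lam$i) / (ki + kj) \<and> v$i = (ki + kj * lam$i) / (ki + kj)"
      unfolding u_def v_def using cu cv kk by (simp add: field_simps)
    thus ?thesis by blast
  next
    case False
    hence "p$i = 0" unfolding p_def by simp
    thus ?thesis using False unfolding u_def v_def by simp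
  qed
  have upos: "0 < u$i" and vpos: "0 < v$i" for i
    using uv[of i] pos[of i] ki kj by auto
  have Ws_eq: "Ws = diagm (c *\<^sub>R p)" unfolding Ws_def c_def p_def
    by (intro arg_cong[where f=diagm]) (simp add: vec_eq_iff)
  have p0: "0 \<le> p$i" for i unfolding p_def by simp
  have c0: "0 < c" unfolding c_def using ki kj by simp
  have psdWs: "psd Ws" unfolding Ws_eq psd_diagm using p0 c0 by simp
  have e1: "ki *\<^sub>R mat 1 - Ws = diagm (ki *\<^sub>R u)" unfolding Ws_eq u_def
    by (simp add: diagm_def mat_def vec_eq_iff field_simps ki[THEN less_imp_neq, symmetric])
  have e2: "Ws + kj *\<^sub>R diagm lam = diagm (kj *\<^sub>R v)" unfolding Ws_eq v_def
    by (simp add: diagm_def vec_eq_iff field_simps kj[THEN less_imp_neq, symmetric])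
  have e3: "mat 1 - (1/ki) *\<^sub>R Ws = diagm u" unfolding Ws_eq u_def
    by (simp add: diagm_def mat_def vec_eq_iff)
  have e4: "diagm lam + (1/kj) *\<^sub>R Ws = diagm v" unfolding Ws_eq v_def
    by (simp add: diagm_def vec_eq_iff)
  have pd1: "pd (ki *\<^sub>R mat 1 - Ws)" unfolding e1 pd_diagm using upos ki by simp
  have pd2: "pd (Ws + kj *\<^sub>R diagm lam)" unfolding e2 pd_diagm using vpos kj by simp
  have lnu: "ln (det (diagm u)) = (\<Sum>i\<in>UNIV. ln (u$i))"
    unfolding det_diagm using upos by (subst ln_prod) (auto simp: less_imp_neq[symmetric])
  have lnv: "ln (det (diagm v)) = (\<Sum>i\<in>UNIV. ln (v$i))"
    unfolding det_diagm using vpos by (subst ln_prod) (auto simp: less_imp_neq[symmetric])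
  have opt: "ki * ln (det (mat 1 - (1/ki) *\<^sub>R W)) + kj * ln (det (diagm lam + (1/kj) *\<^sub>R W))
       \<le> ki * ln (det (mat 1 - (1/ki) *\<^sub>R Ws)) + kj * ln (det (diagm lam + (1/kj) *\<^sub>R Ws))"
    if W: "psd W" "pd (ki *\<^sub>R mat 1 - W)" "pd (W + kj *\<^sub>R diagm lam)" for W
  proof -
    define X1 where "X1 = mat 1 - (1/ki) *\<^sub>R W"
    define X2 where "X2 = diagm lam + (1/kj) *\<^sub>R W"
    have "X1 = (1/ki) *\<^sub>R (ki *\<^sub>R mat 1 - W)" unfolding X1_def using ki
      by (simp add: scaleR_right_diff_distrib)
    hence pdX1: "pd X1" using pd_scale[OF W(2)] ki by simp
    have "X2 = (1/kj) *\<^sub>R (W + kj *\<^sub>R diagm lam)" unfolding X2_def using kj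
      by (simp add: scaleR_right_distrib add.commute)
    hence pdX2: "pd X2" using pd_scale[OF W(3)] kj by simp
    have X1d: "X1$i$i = 1 - W$i$i / ki" for i unfolding X1_def by (simp add: mat_def)
    have X2d: "X2$i$i = lam$i + W$i$i / kj" for i unfolding X2_def by (simp add: diagm_nth)
    have Wd: "0 \<le> W$i$i" for i by (rule psd_diag_nonneg[OF W(1)])
    have L1: "ln (det X1) \<le> (\<Sum>i\<in>UNIV. ln (u$i)) + (\<Sum>i\<in>UNIV. (X1$i$i - u$i) / u$i)"
      by (rule logdet_ineq[OF pdX1]) (use upos in blast)
    have L2: "ln (det X2) \<le> (\<Sum>i\<in>UNIV. ln (v$i)) + (\<Sum>i\<in>UNIV. (X2$i$i - v$i) / v$i)"
      by (rule logdet_ineq[OF pdX2]) (use vpos in blast)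
    have trm: "ki * ((X1$i$i - u$i) / u$i) + kj * ((X2$i$i - v$i) / v$i) \<le> 0" for i
    proof -
      have A: "ki * ((X1$i$i - u$i) / u$i) + kj * ((X2$i$i - v$i) / v$i)
        = (ki * (1 - u$i) - W$i$i) / u$i + (kj * (lam$i - v$i) + W$i$i) / v$i"
        unfolding X1d X2d using ki kj upos[of i] vpos[of i] by (simp add: field_simps)
      from uv[of i] show ?thesis
      proof
        assume h: "u$i = (ki + kj * lam$i) / (ki + kj) \<and> v$i = (ki + kj * lam$i) / (ki + kj)"
        have ue: "v$i = u$i" using h by simp
        have "(ki + kj) * u$i = ki + kj * lam$i" using h kk by simp
        hence "ki * (1 - u$i) + kj * (lam$i - v$i) = 0" unfolding ue by (simp add: algebra_simps)
        hence s0: "(ki * (1 - u$i) - W$i$i) + (kj * (lam$i - v$i) + W$i$i) = 0" by simp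
        have "(ki * (1 - u$i) - W$i$i) / u$i + (kj * (lam$i - v$i) + W$i$i) / v$i
          = ((ki * (1 - u$i) - W$i$i) + (kj * (lam$i - v$i) + W$i$i)) / u$i"
          unfolding ue by (simp only: add_divide_distrib)
        hence "(ki * (1 - u$i) - W$i$i) / u$i + (kj * (lam$i - v$i) + W$i$i) / v$i = 0"
          unfolding s0 by simp
        thus ?thesis using A by simp
      next
        assume h: "p$i = 0 \<and> 1 \<le> lam$i \<and> u$i = 1 \<and> v$i = lam$i"
        have "W$i$i * 1 \<le> W$i$i * lam$i" by (rule mult_left_mono) (use h Wd in auto)
        hence "W$i$i / lam$i \<le> W$i$i" using h by (simp add: divide_le_eq)
        thus ?thesis using A h by simp
      qed
    qed
    have "ki * ln (det X1) + kj * ln (det X2)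
      \<le> ki * ((\<Sum>i\<in>UNIV. ln (u$i)) + (\<Sum>i\<in>UNIV. (X1$i$i - u$i) / u$i))
         + kj * ((\<Sum>i\<in>UNIV. ln (v$i)) + (\<Sum>i\<in>UNIV. (X2$i$i - v$i) / v$i))"
      using L1 L2 ki kj by (intro add_mono mult_left_mono) auto
    also have "\<dots> = ki * (\<Sum>i\<in>UNIV. ln (u$i)) + kj * (\<Sum>i\<in>UNIV. ln (v$i))
         + (\<Sum>i\<in>UNIV. ki * ((X1$i$i - u$i) / u$i) + kj * ((X2$i$i - v$i) / v$i))"
      by (simp add: sum.distrib sum_distrib_left algebra_simps)
    also have "\<dots> \<le> ki * (\<Sum>i\<in>UNIV. ln (u$i)) + kj * (\<Sum>i\<in>UNIV. ln (v$i))"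
      using sum_nonpos[of UNIV, OF trm] by simp
    also have "\<dots> = ki * ln (det (mat 1 - (1/ki) *\<^sub>R Ws)) + kj * ln (det (diagm lam + (1/kj) *\<^sub>R Ws))"
      unfolding e3 e4 lnu lnv ..
    finally show ?thesis unfolding X1_def X2_def .
  qed
  show ?thesis using psdWs pd1 pd2 opt by blast
qed



lemma transpose_conj_sym:
  fixes Q :: "real^'n^'n"
  shows "transpose (Q ** diagm d ** transpose Q) = Q ** diagm d ** transpose Q"
  by (simp only: transpose_conj transpose_diagm)

lemma cg_add: "(G::real^'n^'n) ** X ** H + G ** Y ** H = G ** (X + Y) ** H"
  by (simp only: matrix_add_ldistrib mm_add_rdistrib)
lemma cg_diff: "(G::real^'n^'n) ** X ** H - G ** Y ** H = G ** (X - Y) ** H"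
  by (simp only: mm_diff_ldistrib mm_diff_rdistrib)
lemma cg_scale: "k *\<^sub>R ((G::real^'n^'n) ** X ** H) = G ** (k *\<^sub>R X) ** H"
  by (simp only: mm_scale_l mm_scale_r)
lemma cg_uminus: "- ((G::real^'n^'n) ** X ** H) = G ** (- X) ** H"
  by (simp only: mm_uminus_l mm_uminus_r)

lemma cg_back:
  fixes G Gi X :: "real^'n^'n"
  assumes "Gi ** G = mat 1"
  shows "Gi ** (G ** X ** transpose G) ** transpose Gi = X"
proof -
  have "transpose G ** transpose Gi = mat 1" using assms by (metis matrix_transpose_mul transpose_mat)
  have "Gi ** (G ** X ** transpose G) ** transpose Gi = (Gi ** G) ** X ** (transpose G ** transpose Gi)"
    by (simp only: matrix_mul_assoc[symmetric])
  also have "\<dots> = X" using assms \<open>transpose G ** transpose Gi = mat 1\<close> by simp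
  finally show ?thesis .
qed

lemma pd_cg_iff:
  fixes G Gi X :: "real^'n^'n"
  assumes "G ** Gi = mat 1" "Gi ** G = mat 1"
  shows "pd (G ** X ** transpose G) \<longleftrightarrow> pd X"
  using pd_cong[OF _ assms(1)] pd_cong[OF _ assms(2), of "G ** X ** transpose G"] cg_back[OF assms(2)]
  by auto

lemma psd_cg_iff:
  fixes G Gi X :: "real^'n^'n"
  assumes "G ** Gi = mat 1" "Gi ** G = mat 1"
  shows "psd (G ** X ** transpose G) \<longleftrightarrow> psd X"
  using psd_cong psd_cong[of "G ** X ** transpose G" Gi] cg_back[OF assms(2)]
  by auto

lemma ln_det_cg:
  fixes G X :: "real^'n^'n"
  assumes "det G \<noteq> 0" "0 < det X"
  shows "ln (det (G ** X ** transpose G)) = ln (det G * det G) + ln (det X)"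
proof -
  have "det (G ** X ** transpose G) = (det G * det G) * det X" by (simp add: det_mul det_transpose)
  moreover have "0 < det G * det G" by (metis assms(1) mult_pos_pos mult_neg_neg linorder_neqE_linordered_idom)
  ultimately show ?thesis using assms by (simp add: ln_mult)
qed



theorem proposition3p1:
  fixes A B :: "real^'n^'n" and ki kj :: real
  assumes "ki > 0" and "kj > 0"
    and "sym_mat A" and "sym_mat B"
    and "\<exists>Y. feasible ki kj A B Y"
  shows "pd A \<and>
    (let Ystar = (ki * kj / (ki + kj)) *\<^sub>R
        (msqrt A ** proj_psd (mat 1 - msqrt_inv A ** B ** msqrt_inv A) ** msqrt A)
     in feasible ki kj A B Ystar \<and>
        (\<forall>Y. feasible ki kj A B Y \<longrightarrow> obj ki kj A B Y \<le> obj ki kj A B Ystar))"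
proof -
  have ki: "ki > 0" and kj: "kj > 0" using assms(1,2) .
  obtain Y0 where F0: "feasible ki kj A B Y0" using assms(5) by blast
  have Y0: "psd Y0" "pd (Y0 - - (kj *\<^sub>R B))" "pd (ki *\<^sub>R A - Y0)"
    using F0 unfolding feasible_def loewner_less_def by auto
  have pdA: "pd A"
    unfolding pd_def
  proof (intro conjI allI impI)
    show "sym_mat A" by (rule assms(3))
    fix x :: "real^'n" assume "x \<noteq> 0"
    have "0 < inner x ((ki *\<^sub>R A - Y0) *v x)" using Y0(3) \<open>x\<noteq>0\<close> unfolding pd_def by blast
    moreover have "0 \<le> inner x (Y0 *v x)" using Y0(1) unfolding psd_def by blast
    moreover have "inner x ((ki *\<^sub>R A - Y0) *v x) = ki * inner x (A *v x) - inner x (Y0 *v x)"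
      by (simp add: matrix_vector_mult_diff_rdistrib inner_diff_right scaleR_matrix_vector_assoc[symmetric])
    ultimately have "0 < ki * inner x (A *v x)" by linarith
    thus "0 < inner x (A *v x)" using ki by (simp add: zero_less_mult_iff)
  qed
  obtain Q a where Q: "transpose (Q::real^'n^'n) ** Q = mat 1" "Q ** transpose Q = mat 1"
      "A = Q ** diagm a ** transpose Q" "\<forall>i. 0 < a$i"
    using pd_spec[OF pdA] by blast
  define S where "S = Q ** diagm (\<chi> i. sqrt (a$i)) ** transpose Q"
  define Si where "Si = Q ** diagm (\<chi> i. 1 / sqrt (a$i)) ** transpose Q"
  have msA: "msqrt A = S" using msqrt_eq[OF Q(1,2), of a] Q(3,4) unfolding S_def by (simp add: less_imp_le)
  have d1: "diagm (\<chi> i. sqrt (a$i)) ** diagm (\<chi> i. 1 / sqrt (a$i)) = mat 1"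
    unfolding diagm_mult mat1_diagm using Q(4)
    by (intro arg_cong[where f=diagm]) (simp add: vec_eq_iff less_imp_neq[symmetric])
  have d2: "diagm (\<chi> i. 1 / sqrt (a$i)) ** diagm (\<chi> i. sqrt (a$i)) = mat 1"
    unfolding diagm_mult mat1_diagm using Q(4)
    by (intro arg_cong[where f=diagm]) (simp add: vec_eq_iff less_imp_neq[symmetric])
  have d3: "diagm (\<chi> i. sqrt (a$i)) ** diagm (\<chi> i. sqrt (a$i)) = diagm a"
    unfolding diagm_mult using Q(4)
    by (intro arg_cong[where f=diagm]) (simp add: vec_eq_iff less_imp_le)
  have SSi: "S ** Si = mat 1" unfolding S_def Si_def conj_mult[OF Q(1)] d1 using Q(2) by simp
  have SiS: "Si ** S = mat 1" unfolding S_def Si_def conj_mult[OF Q(1)] d2 using Q(2) by simp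
  have SS: "S ** S = A" unfolding S_def conj_mult[OF Q(1)] d3 using Q(3) by simp
  have msiA: "msqrt_inv A = Si" unfolding msqrt_inv_def msA by (rule matrix_inv_eq[OF SSi SiS])
  have tS: "transpose S = S" unfolding S_def by (rule transpose_conj_sym)
  have tSi: "transpose Si = Si" unfolding Si_def by (rule transpose_conj_sym)
  define C where "C = Si ** B ** Si"
  have symC: "transpose C = C" using sym_cong[OF assms(4), of Si] tSi unfolding C_def sym_mat_def by simp
  obtain R lam where R: "transpose (R::real^'n^'n) ** R = mat 1" "R ** transpose R = mat 1"
      "C = R ** diagm lam ** transpose R"
    using spectral[OF symC] by blast
  have Meq: "mat 1 - C = R ** diagm (\<chi> i. 1 - lam$i) ** transpose R"
  proof -
    have "mat 1 = R ** diagm (\<chi> i. 1) ** transpose R" using R(2) by (simp add: mat1_diagm[symmetric])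
    hence "mat 1 - C = R ** (diagm (\<chi> i. 1) - diagm lam) ** transpose R"
      using R(3) cg_diff by metis
    also have "diagm (\<chi> i. 1) - diagm lam = diagm (\<chi> i. 1 - lam$i)"
      unfolding diagm_diff by (intro arg_cong[where f=diagm]) (simp add: vec_eq_iff)
    finally show ?thesis .
  qed
  define p where "p = (\<chi> i. max (1 - lam$i) (0::real))"
  have Peq: "proj_psd (mat 1 - C) = R ** diagm p ** transpose R"
    unfolding Meq p_def using proj_eq[OF R(1,2)] by simp
  define c where "c = ki * kj / (ki + kj)"
  define G where "G = S ** R"
  define Gi where "Gi = transpose R ** Si"
  have GGi: "G ** Gi = mat 1" unfolding G_def Gi_def
    by (simp only: matrix_mul_assoc[symmetric] mm_cancel[OF R(2)] SSi)
  have GiG: "Gi ** G = mat 1" unfolding G_def Gi_def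
    by (simp only: matrix_mul_assoc[symmetric] mm_cancel[OF SiS] R(1))
  have detG: "det G \<noteq> 0" using GGi by (metis det_I det_mul mult_zero_left zero_neq_one)
  have tG: "transpose G = transpose R ** S" unfolding G_def by (simp only: matrix_transpose_mul tS)
  have cgS: "G ** X ** transpose G = S ** (R ** X ** transpose R) ** S" for X
    unfolding tG unfolding G_def by (simp only: matrix_mul_assoc)
  have Acg: "A = G ** mat 1 ** transpose G" unfolding cgS using R(2) SS by simp
  have Bcg: "B = G ** diagm lam ** transpose G" unfolding cgS R(3)[symmetric] C_def
    by (simp only: matrix_mul_assoc[symmetric] mm_cancel[OF SSi] SiS matrix_mul_rid)
  define Ws where "Ws = diagm (\<chi> i. (ki * kj / (ki + kj)) * max (1 - lam$i) 0)"
  have Wsp: "Ws = c *\<^sub>R diagm p" unfolding Ws_def p_def c_def diagm_scale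
    by (intro arg_cong[where f=diagm]) (simp add: vec_eq_iff)
  have Ystar: "(ki * kj / (ki + kj)) *\<^sub>R (msqrt A ** proj_psd (mat 1 - msqrt_inv A ** B ** msqrt_inv A) ** msqrt A)
      = G ** Ws ** transpose G"
    unfolding msA msiA C_def[symmetric] Peq c_def[symmetric] Wsp cgS
    by (simp only: cg_scale)
  have red: "feasible ki kj A B (G ** W ** transpose G) \<longleftrightarrow>
      (psd W \<and> pd (ki *\<^sub>R mat 1 - W) \<and> pd (W + kj *\<^sub>R diagm lam))" for W
  proof -
    have e1: "ki *\<^sub>R A - G ** W ** transpose G = G ** (ki *\<^sub>R mat 1 - W) ** transpose G"
      by (subst Acg) (simp only: cg_scale cg_diff)
    have e2: "G ** W ** transpose G - - (kj *\<^sub>R B) = G ** (W + kj *\<^sub>R diagm lam) ** transpose G"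
      by (subst Bcg) (simp only: cg_scale cg_uminus cg_diff diff_minus_eq_add)
    show ?thesis unfolding feasible_def loewner_less_def e1 e2
      psd_cg_iff[OF GGi GiG] pd_cg_iff[OF GGi GiG] by blast
  qed
  have objred: "obj ki kj A B (G ** W ** transpose G) = (ki + kj) * ln (det G * det G) +
      (ki * ln (det (mat 1 - (1/ki) *\<^sub>R W)) + kj * ln (det (diagm lam + (1/kj) *\<^sub>R W)))"
    if W1: "pd (ki *\<^sub>R mat 1 - W)" and W2: "pd (W + kj *\<^sub>R diagm lam)" for W
  proof -
    have "mat 1 - (1/ki) *\<^sub>R W = (1/ki) *\<^sub>R (ki *\<^sub>R mat 1 - W)" using ki
      by (simp add: scaleR_right_diff_distrib)
    hence p1: "0 < det (mat 1 - (1/ki) *\<^sub>R W)" using pd_det_pos[OF pd_scale[OF W1]] ki by simp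
    have "diagm lam + (1/kj) *\<^sub>R W = (1/kj) *\<^sub>R (W + kj *\<^sub>R diagm lam)" using kj
      by (simp add: scaleR_right_distrib add.commute)
    hence p2: "0 < det (diagm lam + (1/kj) *\<^sub>R W)" using pd_det_pos[OF pd_scale[OF W2]] kj by simp
    have e3: "A - (1/ki) *\<^sub>R (G ** W ** transpose G) = G ** (mat 1 - (1/ki) *\<^sub>R W) ** transpose G"
      by (subst Acg) (simp only: cg_scale cg_diff)
    have e4: "B + (1/kj) *\<^sub>R (G ** W ** transpose G) = G ** (diagm lam + (1/kj) *\<^sub>R W) ** transpose G"
      by (subst Bcg) (simp only: cg_scale cg_add)
    show ?thesis unfolding obj_def e3 e4 ln_det_cg[OF detG p1] ln_det_cg[OF detG p2]
      by (simp add: algebra_simps)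
  qed
  have ex: "\<exists>W0. psd W0 \<and> pd (ki *\<^sub>R mat 1 - W0) \<and> pd (W0 + kj *\<^sub>R diagm lam)"
  proof -
    have "Y0 = G ** (Gi ** Y0 ** transpose Gi) ** transpose G" using cg_back[OF GGi] by simp
    hence "feasible ki kj A B (G ** (Gi ** Y0 ** transpose Gi) ** transpose G)" using F0 by simp
    thus ?thesis unfolding red by blast
  qed
  have RD: "psd Ws \<and> pd (ki *\<^sub>R mat 1 - Ws) \<and> pd (Ws + kj *\<^sub>R diagm lam) \<and>
    (\<forall>W. psd W \<and> pd (ki *\<^sub>R mat 1 - W) \<and> pd (W + kj *\<^sub>R diagm lam) \<longrightarrow>
       ki * ln (det (mat 1 - (1/ki) *\<^sub>R W)) + kj * ln (det (diagm lam + (1/kj) *\<^sub>R W))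
       \<le> ki * ln (det (mat 1 - (1/ki) *\<^sub>R Ws)) + kj * ln (det (diagm lam + (1/kj) *\<^sub>R Ws)))"
    using reduced[OF ki kj ex] unfolding Ws_def .
  have feasS: "feasible ki kj A B (G ** Ws ** transpose G)" unfolding red using RD by blast
  have optS: "obj ki kj A B Y \<le> obj ki kj A B (G ** Ws ** transpose G)"
    if FY: "feasible ki kj A B Y" for Y
  proof -
    define W where "W = Gi ** Y ** transpose Gi"
    have YW: "Y = G ** W ** transpose G" unfolding W_def using cg_back[OF GGi] by simp
    have FW: "psd W \<and> pd (ki *\<^sub>R mat 1 - W) \<and> pd (W + kj *\<^sub>R diagm lam)"
      using FY unfolding YW red .
    show ?thesis unfolding YW objred[OF conjunct1[OF conjunct2[OF FW]] conjunct2[OF conjunct2[OF FW]]]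
      objred[OF conjunct1[OF conjunct2[OF RD]] conjunct1[OF conjunct2[OF conjunct2[OF RD]]]]
      using RD FW by simp
  qed
  show ?thesis unfolding Let_def Ystar using pdA feasS optS by blast
qed


end
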